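(* Let $p\equiv 1\pmod 8$ be a prime, and suppose there is a primitive root $a$ of $\mathbb{F}_p^*$ such that $a(a^2-a+1)\in(\mathbb{F}_p^* )^4=\{x^4:x\in\mathbb{F}_p^*\}$. Let $K_{p+1}$ be the complete graph on vertex set $\mathbb{F}_p\cup\{c\}$, where $c\notin\mathbb{F}_p$ is an extra vertex. Regard $0$ and the nonzero squares of $\mathbb{F}_p$ as "quadratic residues", and $c$ and the non-squares of $\mathbb{F}_p^*$ as "quadratic non-residues". Then there exists a $1$-factor $F$ of $K_{p+1}$ such that (1) each edge of $F$ joins a quadratic residue and a quadratic non-residue, and (2) the lengths of the edges of $F$ are pairwise distinct.
   Context: A $1$-factor is a perfect matching. For $x\neq y$ in $\mathbb{F}_p$, the length of the edge $\{x,y\}$ is $\ell(x,y)=\{x-y,y-x\}\subset\mathbb{F}_p^*$; every edge $\{c,x\}$ with $x\in\mathbb{F}_p$ is assigned length $\infty$, distinct from all subsets of $\mathbb{F}_p^*$. "Pairwise distinct lengths" means no two distinct edges of $F$ have the same length. *)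

theory Defs
  imports "HOL-Number_Theory.Number_Theory"
begin

text \<open>Vertices of K_{p+1}: Some x for x in F_p (represented by 0..p-1), None for the extra vertex c.\<close>

definition kverts :: "nat \<Rightarrow> nat option set" where
  "kverts p = insert None (Some ` {0..<p})"

definition is_one_factor :: "nat \<Rightarrow> nat option set set \<Rightarrow> bool" where
  "is_one_factor p F \<longleftrightarrow>
     (\<forall>e\<in>F. \<exists>u v. u \<noteq> v \<and> u \<in> kverts p \<and> v \<in> kverts p \<and> e = {u, v}) \<and>
     (\<forall>v\<in>kverts p. \<exists>!e. e \<in> F \<and> v \<in> e)"

definition qres :: "nat \<Rightarrow> nat option \<Rightarrow> bool" where
  "qres p v = (case v of None \<Rightarrow> False | Some x \<Rightarrow> QuadRes (int p) (int x))"

text \<open>Length of an edge: None stands for \<infinity> (edges through c); otherwise Some {x-y, y-x} (mod p).\<close>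
definition edge_len :: "nat \<Rightarrow> nat option set \<Rightarrow> nat set option" where
  "edge_len p e = (if None \<in> e then None
     else Some {d. \<exists>x y. Some x \<in> e \<and> Some y \<in> e \<and> x \<noteq> y \<and> d = (x + p - y) mod p})"

end

theory Submission
  imports Defs
begin

locale S0 =
  fixes p a :: nat
  assumes prime: "prime p" and p8: "[p = 1] (mod 8)" and prim: "residue_primroot p a"
begin

definition "m = p - 1"
definition "n = (p - 1) div 2"

lemma p1: "p > 1" using prime prime_gt_1_nat by blast

lemma m8: "8 dvd m"
proof -
  have "[p - 1 = 1 - 1] (mod 8)" using p8 p1 by (intro cong_diff_nat) auto
  then show ?thesis unfolding m_def by (simp add: cong_0_iff)
qed

lemma mn: "m = 2 * n" and n4: "4 dvd n" and n_ge: "n \<ge> 4" and m_pos: "m > 0"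
  using m8 p1 unfolding m_def n_def by (auto elim!: dvdE)

lemma cop: "coprime p a" using prim by (simp add: residue_primroot_def)

lemma ord_m: "ord p a = m"
  using prim prime by (simp add: residue_primroot_def totient_prime m_def)

lemma pow_cong_iff: "[a ^ i = a ^ j] (mod p) \<longleftrightarrow> [i = j] (mod m)"
  using order_divides_expdiff[OF cop] ord_m by simp

lemma pow_cong_iff_int: "[int a ^ i = int a ^ j] (mod int p) \<longleftrightarrow> [i = j] (mod m)"
  using pow_cong_iff by (metis cong_int_iff of_nat_power)

definition g :: "nat \<Rightarrow> nat" where "g k = a ^ k mod p"

lemma g_int: "int (g k) = int a ^ k mod int p"
  unfolding g_def by (simp add: of_nat_mod)

lemma g_cong: "[int (g k) = int a ^ k] (mod int p)"
  unfolding g_int by (simp add: cong_def)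

lemma g_inj: "inj_on g {..<m}"
proof
  fix i j assume "i \<in> {..<m}" "j \<in> {..<m}" "g i = g j"
  then have "[a ^ i = a ^ j] (mod p)" by (simp add: g_def cong_def)
  then have "[i = j] (mod m)" using pow_cong_iff by simp
  then show "i = j" using \<open>i \<in> {..<m}\<close> \<open>j \<in> {..<m}\<close> by (simp add: cong_def)
qed

lemma g_pos: "g k \<in> {1..<p}"
proof -
  have "coprime p (a ^ k)" using cop by simp
  then have "\<not> p dvd a ^ k" using p1
    by (metis coprime_common_divisor_nat dvd_refl less_irrefl)
  then show ?thesis unfolding g_def using p1 by (auto simp: dvd_eq_mod_eq_0)
qed

lemma g_surj: "g ` {..<m} = {1..<p}"
proof -
  have "g ` {..<m} \<subseteq> {1..<p}" using g_pos by auto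
  moreover have "card (g ` {..<m}) = card {1..<p}"
    using card_image[OF g_inj] by (simp add: m_def)
  ultimately show ?thesis by (intro card_subset_eq) auto
qed

lemma g_surj': "x \<in> {1..<p} \<Longrightarrow> \<exists>k<m. g k = x"
  using g_surj by (metis imageE lessThan_iff)

lemma neg1: "[int a ^ n = - 1] (mod int p)"
proof -
  have "[int a ^ (2*n) = int a ^ 0] (mod int p)"
    using pow_cong_iff_int[of "2*n" 0] mn by (simp add: cong_def)
  moreover have "int a ^ (2*n) - 1 = (int a ^ n - 1) * (int a ^ n + 1)"
    by (simp add: power_mult power2_eq_square algebra_simps)
  ultimately have "int p dvd (int a ^ n - 1) * (int a ^ n + 1)"
    by (metis cong_iff_dvd_diff power_0 cong_sym_eq)
  then have "int p dvd (int a ^ n - 1) \<or> int p dvd (int a ^ n + 1)"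
    using prime by (simp add: prime_dvd_mult_iff)
  moreover have "\<not> [int a ^ n = int a ^ 0] (mod int p)"
    using pow_cong_iff_int[of n 0] mn n_ge by (simp add: cong_def)
  ultimately show ?thesis
    by (metis cong_iff_dvd_diff power_0 diff_minus_eq_add)
qed

lemma am1: "[int a ^ m = 1] (mod int p)"
  using pow_cong_iff_int[of m 0] by (simp add: cong_def)

lemma negshift: "[int a ^ (t + n) = - (int a ^ t)] (mod int p)"
proof -
  have "[int a ^ t * int a ^ n = int a ^ t * (- 1)] (mod int p)"
    by (intro cong_mult cong_refl neg1)
  then show ?thesis by (simp add: power_add)
qed

definition j :: "nat \<Rightarrow> nat" where
  "j k = (if k < n then k + n + 1 else if 4 dvd k then k - n + 3 else k - n - 1)"

lemma j_range: "even k \<Longrightarrow> k < m \<Longrightarrow> j k < m \<and> odd (j k)"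
proof -
  assume k: "even k" "k < m"
  obtain N where N: "n = 4 * N" using n4 by (elim dvdE)
  obtain K where K: "k = 2 * K" using k by (elim evenE)
  have "K < 4 * N" using k K N mn by simp
  show ?thesis
  proof (cases "k < n")
    case True
    then have "j k = 2 * K + 4 * N + 1" unfolding j_def using K N by simp
    moreover have "2 * K + 4 * N + 1 < 8 * N" using True K N by simp
    ultimately show ?thesis using mn N by simp
  next
    case False
    show ?thesis
    proof (cases "4 dvd k")
      case True
      then have "even K" using K by auto
      then obtain L where L: "K = 2 * L" by (elim evenE)
      have "j k = 4 * L - 4 * N + 3" unfolding j_def using False True K L N by simp
      then show ?thesis using mn N K L False k by simp
    next
      case F2: False
      then have "odd K" using K by auto
      then obtain L where L: "K = 2 * L + 1" by (elim oddE)
      have "j k = 4 * L + 1 - 4 * N" unfolding j_def using False F2 K L N by simp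
      then show ?thesis using mn N K L False k by simp presburger
    qed
  qed
qed

definition jinv :: "nat \<Rightarrow> nat" where
  "jinv l = (if l > n then l - n - 1 else if l mod 4 = 3 then l + n - 3 else l + n + 1)"

lemma even4: "even (k::nat) \<Longrightarrow> k = 4 * (k div 4) \<or> k = 4 * (k div 4) + 2" by presburger
lemma odd4: "odd (k::nat) \<Longrightarrow> k = 4 * (k div 4) + 1 \<or> k = 4 * (k div 4) + 3" by presburger

lemma jinv_j: "even k \<Longrightarrow> k < m \<Longrightarrow> jinv (j k) = k"
proof -
  assume k: "even k" "k < m"
  obtain N where N: "n = 4 * N" using n4 by (elim dvdE)
  define L where "L = k div 4"
  have kL: "k = 4 * L \<or> k = 4 * L + 2" using even4[OF k(1)] L_def by simp
  have km: "k < 8 * N" using k mn N by simp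
  show ?thesis
  proof (cases "k < n")
    case True
    then show ?thesis unfolding j_def jinv_def by simp
  next
    case False
    from kL show ?thesis
    proof
      assume k4: "k = 4 * L"
      have "L < 2 * N" "N \<le> L" using km False k4 N by auto
      then have "j k = 4 * (L - N) + 3" unfolding j_def using False k4 N by simp
      moreover have "L - N < N" "4 * (L - N) + 4 * N = 4 * L" using \<open>L < 2 * N\<close> \<open>N \<le> L\<close> by auto
      ultimately show ?thesis unfolding jinv_def using k4 N by simp
    next
      assume k4: "k = 4 * L + 2"
      have "L < 2 * N" "N \<le> L" using km False k4 N by auto
      have nd: "\<not> 4 dvd k" using k4 by presburger
      then have "j k = 4 * (L - N) + 1" unfolding j_def using False k4 N by simp
      moreover have "L - N < N" "4 * (L - N) + 4 * N = 4 * L" using \<open>L < 2 * N\<close> \<open>N \<le> L\<close> by auto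
      ultimately show ?thesis unfolding jinv_def using k4 N by simp
    qed
  qed
qed

lemma j_inj: "even k1 \<Longrightarrow> k1 < m \<Longrightarrow> even k2 \<Longrightarrow> k2 < m \<Longrightarrow> j k1 = j k2 \<Longrightarrow> k1 = k2"
  by (metis jinv_j)

lemma j_surj: "odd l \<Longrightarrow> l < m \<Longrightarrow> \<exists>k. even k \<and> k < m \<and> j k = l"
proof -
  assume l: "odd l" "l < m"
  obtain N where N: "n = 4 * N" using n4 by (elim dvdE)
  define L where "L = l div 4"
  have lL: "l = 4 * L + 1 \<or> l = 4 * L + 3" using odd4[OF l(1)] L_def by simp
  have lm: "l < 8 * N" using l mn N by simp
  show ?thesis
  proof (cases "l > n")
    case True
    have "l - n - 1 < n" using lm N by linarith
    then have "j (l - n - 1) = l" unfolding j_def using True lm N by simp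
    moreover have "even (l - n - 1)" using True l N by simp
    ultimately show ?thesis using True lm N mn by (intro exI[of _ "l - n - 1"]) simp
  next
    case False
    from lL show ?thesis
    proof
      assume l4: "l = 4 * L + 3"
      have "L < N" using False l4 N by simp
      have "j (4 * (L + N)) = l" unfolding j_def using l4 N by simp
      then show ?thesis using \<open>L < N\<close> N mn by (intro exI[of _ "4 * (L + N)"]) simp
    next
      assume l4: "l = 4 * L + 1"
      have "L < N" using False l4 N by simp
      have "\<not> 4 dvd (4 * (L + N) + 2)" by presburger
      then have "j (4 * (L + N) + 2) = l" unfolding j_def using l4 N by simp
      then show ?thesis using \<open>L < N\<close> N mn by (intro exI[of _ "4 * (L + N) + 2"]) simp
    qed
  qed
qed

lemma QR_iff: "QuadRes (int p) (int (g k)) \<longleftrightarrow> even k"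
proof
  assume "even k"
  then obtain h where h: "k = 2 * h" by (elim evenE)
  have "(int a ^ h)^2 = int a ^ k" using h by (simp add: power_mult[symmetric] mult.commute)
  then have "[(int a ^ h)^2 = int (g k)] (mod int p)"
    using g_cong[of k] by (simp add: cong_sym)
  then show "QuadRes (int p) (int (g k))" unfolding QuadRes_def by blast
next
  assume "QuadRes (int p) (int (g k))"
  then obtain y where y: "[y^2 = int (g k)] (mod int p)" unfolding QuadRes_def by blast
  show "even k"
  proof (cases "y mod int p = 0")
    case True
    then have "int p dvd y" by auto
    then have "int p dvd y^2" by (simp add: power2_eq_square)
    then have "int p dvd int (g k)" using cong_dvd_iff[OF y] by simp
    then have "p dvd g k" by simp
    then show ?thesis using g_pos[of k] by (auto dest: dvd_imp_le)
  next
    case False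
    have "0 \<le> y mod int p" "y mod int p < int p" using p1 by auto
    then have "nat (y mod int p) \<in> {1..<p}" using False by auto
    then obtain i where i: "i < m" "g i = nat (y mod int p)" using g_surj' by blast
    then have "int (g i) = y mod int p" using \<open>0 \<le> y mod int p\<close> by simp
    then have "y mod int p = int a ^ i mod int p" using g_int[of i] by simp
    then have "[y = int a ^ i] (mod int p)" by (simp add: cong_def)
    then have c1: "[y^2 = (int a ^ i)^2] (mod int p)" by (intro cong_pow)
    have e1: "(int a ^ i)^2 = int a ^ (2*i)" by (simp add: power_mult[symmetric] mult.commute)
    have "[int a ^ (2*i) = y^2] (mod int p)" using c1 e1 by (simp add: cong_sym)
    also have "[y^2 = int (g k)] (mod int p)" by (rule y)
    also have "[int (g k) = int a ^ k] (mod int p)" by (rule g_cong)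
    finally have "[int a ^ (2*i) = int a ^ k] (mod int p)" .
    then have "[2*i = k] (mod m)" by (rule pow_cong_iff_int[THEN iffD1])
    moreover have "2 dvd m" using mn by simp
    ultimately have "[2*i = k] (mod 2)" by (rule cong_dvd_modulus_nat)
    then show ?thesis by (simp add: cong_def even_iff_mod_2_eq_zero)
  qed
qed

end

locale S = S0 +
  fixes r :: nat
  assumes rr: "[int a ^ (4*r) = int a * (int a ^ 2 - int a + 1)] (mod int p)"
begin

definition e :: "nat \<Rightarrow> nat" where
  "e k = (if k < n then k else if 4 dvd k then k + 4 * r + m - 1 else k - 1)"

lemma Q: "[int a ^ 2 - int a + 1 = int a ^ (4*r+m-1)] (mod int p)"
proof -
  have "[int a ^ (4*r+m-1) = int a ^ (m - 1) * int a ^ (4*r)] (mod int p)"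
  proof -
    have "4*r+m-1 = (m-1) + 4*r" using m_pos by simp
    then show ?thesis by (simp add: power_add)
  qed
  also have "[int a ^ (m - 1) * int a ^ (4*r) = int a ^ (m - 1) * (int a * (int a ^ 2 - int a + 1))] (mod int p)"
    by (intro cong_mult cong_refl rr)
  also have "int a ^ (m - 1) * (int a * (int a ^ 2 - int a + 1)) = int a ^ m * (int a ^ 2 - int a + 1)"
    using m_pos by (simp add: power_Suc2[symmetric] del: power_Suc)
  also have "[int a ^ m * (int a ^ 2 - int a + 1) = 1 * (int a ^ 2 - int a + 1)] (mod int p)"
    by (intro cong_mult cong_refl am1)
  finally show ?thesis by (simp add: cong_sym_eq)
qed

lemma jg_neg: "j k + n = t \<Longrightarrow> [int (g (j k)) = - (int a ^ t)] (mod int p)"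
proof -
  assume t: "j k + n = t"
  have "[int a ^ t = - (int a ^ j k)] (mod int p)" using negshift[of "j k"] t by simp
  then have "[- (int a ^ t) = int a ^ j k] (mod int p)"
    by (metis cong_minus_minus_iff minus_minus)
  then show ?thesis using g_cong[of "j k"] by (meson cong_sym cong_trans)
qed

lemma diff: "even k \<Longrightarrow> k < m \<Longrightarrow>
  [int (g k) - int (g (j k)) = (int a + 1) * int a ^ e k] (mod int p)"
proof -
  assume k: "even k" "k < m"
  show ?thesis
  proof (cases "k < n")
    case True
    then have "j k + n = (k + 1) + n + n" by (simp add: j_def)
    have "j k = (k + 1) + n" using True by (simp add: j_def)
    have "[int a ^ (k + 1 + n) = - (int a ^ (k+1))] (mod int p)" by (rule negshift)
    then have A: "[int (g (j k)) = - (int a ^ (k+1))] (mod int p)"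
      using g_cong[of "j k"] \<open>j k = (k + 1) + n\<close> by (metis cong_trans)
    have "[int (g k) - int (g (j k)) = int a ^ k - (- (int a ^ (k+1)))] (mod int p)"
      by (intro cong_diff g_cong A)
    moreover have "int a ^ k - (- (int a ^ (k+1))) = (int a + 1) * int a ^ e k"
      using True by (simp add: e_def algebra_simps)
    ultimately show ?thesis by simp
  next
    case False
    show ?thesis
    proof (cases "4 dvd k")
      case True
      have "j k + n = k + 3" using False True by (simp add: j_def)
      then have A: "[int (g (j k)) = - (int a ^ (k+3))] (mod int p)" by (rule jg_neg)
      have "[int (g k) - int (g (j k)) = int a ^ k - (- (int a ^ (k+3)))] (mod int p)"
        by (intro cong_diff g_cong A)
      moreover have "int a ^ k - (- (int a ^ (k+3))) = (int a + 1) * int a ^ k * (int a ^ 2 - int a + 1)"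
        by (simp add: algebra_simps power_add power2_eq_square numeral_3_eq_3)
      moreover have "[(int a + 1) * int a ^ k * (int a ^ 2 - int a + 1) = (int a + 1) * int a ^ k * int a ^ (4*r+m-1)] (mod int p)"
        by (intro cong_mult cong_refl Q)
      moreover have "(int a + 1) * int a ^ k * int a ^ (4*r+m-1) = (int a + 1) * int a ^ e k"
      proof -
        have "k + 4*r + m - 1 = k + (4*r+m-1)" using m_pos by simp
        then show ?thesis using False True by (simp add: e_def power_add mult.assoc)
      qed
      ultimately show ?thesis by (metis cong_trans)
    next
      case F2: False
      have "k \<noteq> n" using F2 n4 by auto
      then have "j k + n = k - 1" using False F2 by (simp add: j_def)
      then have A: "[int (g (j k)) = - (int a ^ (k - 1))] (mod int p)" by (rule jg_neg)
      have "[int (g k) - int (g (j k)) = int a ^ k - (- (int a ^ (k - 1)))] (mod int p)"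
        by (intro cong_diff g_cong A)
      moreover have "k = Suc (k - 1)" using False n_ge by simp
      then have "int a ^ k - (- (int a ^ (k - 1))) = (int a + 1) * int a ^ e k"
        using False F2 by (simp add: e_def algebra_simps) (metis power_Suc)
      ultimately show ?thesis by simp
    qed
  qed
qed

lemma a1_cop: "coprime (int a + 1) (int p)"
proof -
  have "\<not> int p dvd (int a + 1)"
  proof
    assume "int p dvd (int a + 1)"
    then have "[int a = - 1] (mod int p)"
      by (simp add: cong_iff_dvd_diff)
    then have "[int a ^ 1 = - 1] (mod int p)" by simp
    then have "[int a ^ 1 = int a ^ n] (mod int p)"
      using cong_sym[OF neg1] by (rule cong_trans)
    then have "[1 = n] (mod m)" by (rule pow_cong_iff_int[THEN iffD1])
    then show False using mn n_ge by (simp add: cong_def)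
  qed
  then have "coprime (int p) (int a + 1)" using prime by (intro prime_imp_coprime) auto
  then show ?thesis by (simp add: coprime_commute)
qed

lemma e_mod: "even k \<Longrightarrow> k < m \<Longrightarrow>
   e k mod 4 = (if k < n then k mod 4 else if 4 dvd k then 3 else 1)"
proof -
  assume k: "even k" "k < m"
  obtain M where M: "m = 4 * M" using n4 mn by auto
  have "M > 0" using M m_pos by simp
  show ?thesis
  proof (cases "k < n")
    case True then show ?thesis by (simp add: e_def)
  next
    case False
    show ?thesis
    proof (cases "4 dvd k")
      case True
      then obtain L where L: "k = 4 * L" by (elim dvdE)
      have "e k = 4 * (L + r + M - 1) + 3" using False True L M \<open>M > 0\<close> by (simp add: e_def)
      then show ?thesis using False True by simp
    next
      case F2: False
      have "k = 4 * (k div 4) + 2" using F2 k(1) by presburger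
      moreover have "k \<ge> 2" using False n_ge by simp
      ultimately have "e k = 4 * (k div 4) + 1" using False F2 by (simp add: e_def)
      then show ?thesis using False F2 by simp
    qed
  qed
qed

lemma e_lt: "k < n \<Longrightarrow> e k = k" by (simp add: e_def)
lemma e_ge4: "\<not> k < n \<Longrightarrow> 4 dvd k \<Longrightarrow> e k = k + (4 * r + m - 1)"
  using m_pos by (simp add: e_def)
lemma e_ge2: "\<not> k < n \<Longrightarrow> \<not> 4 dvd k \<Longrightarrow> int (e k) = int k - 1"
proof -
  assume "\<not> k < n" "\<not> 4 dvd k"
  moreover have "k \<ge> 1" using calculation n_ge by simp
  ultimately show ?thesis by (simp add: e_def of_nat_diff)
qed

lemma emod_lt: "even k \<Longrightarrow> k < m \<Longrightarrow> e k mod 4 \<in> {0, 2} \<longleftrightarrow> k < n"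
proof -
  assume k: "even k" "k < m"
  have "k mod 4 = 0 \<or> k mod 4 = 2" using k(1) by presburger
  then show ?thesis using e_mod[OF k] by auto
qed

lemma cls: "even k1 \<Longrightarrow> k1 < m \<Longrightarrow> even k2 \<Longrightarrow> k2 < m \<Longrightarrow> [e k1 = e k2] (mod 4) \<Longrightarrow>
   ((k1 < n \<and> k2 < n) \<or> (n \<le> k1 \<and> n \<le> k2)) \<and> int (e k1) - int (e k2) = int k1 - int k2"
proof -
  assume k: "even k1" "k1 < m" "even k2" "k2 < m" "[e k1 = e k2] (mod 4)"
  have m1: "e k1 mod 4 = e k2 mod 4" using k(5) by (simp add: cong_def)
  have same: "k1 < n \<longleftrightarrow> k2 < n" using emod_lt[OF k(1,2)] emod_lt[OF k(3,4)] m1 by simp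
  show ?thesis
  proof (cases "k1 < n")
    case True
    then show ?thesis using same by (simp add: e_lt)
  next
    case False
    then have F2: "\<not> k2 < n" using same by simp
    have "(4 dvd k1) \<longleftrightarrow> (4 dvd k2)"
    proof -
      have "e k1 mod 4 = (if 4 dvd k1 then 3 else 1)" using e_mod[OF k(1,2)] False by simp
      moreover have "e k2 mod 4 = (if 4 dvd k2 then 3 else 1)" using e_mod[OF k(3,4)] F2 by simp
      ultimately show ?thesis using m1 by (cases "4 dvd k1"; cases "4 dvd k2") auto
    qed
    then show ?thesis using False F2
      by (cases "4 dvd k1") (simp_all add: e_ge4 e_ge2)
  qed
qed

lemma m_dvd_small: "int m dvd d \<Longrightarrow> \<bar>d\<bar> < int m \<Longrightarrow> d = 0"
proof (rule ccontr)
  assume "int m dvd d" "\<bar>d\<bar> < int m" "d \<noteq> 0"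
  then have "\<bar>int m\<bar> \<le> \<bar>d\<bar>" using dvd_imp_le_int by blast
  then show False using \<open>\<bar>d\<bar> < int m\<close> by simp
qed

lemma key: "even k1 \<Longrightarrow> k1 < m \<Longrightarrow> even k2 \<Longrightarrow> k2 < m \<Longrightarrow>
   [(int a + 1) * int a ^ e k1 = (int a + 1) * int a ^ e k2] (mod int p) \<or>
   [(int a + 1) * int a ^ e k1 = - ((int a + 1) * int a ^ e k2)] (mod int p) \<Longrightarrow> k1 = k2"
proof -
  assume k: "even k1" "k1 < m" "even k2" "k2 < m"
  assume h: "[(int a + 1) * int a ^ e k1 = (int a + 1) * int a ^ e k2] (mod int p) \<or>
   [(int a + 1) * int a ^ e k1 = - ((int a + 1) * int a ^ e k2)] (mod int p)"
  have "[int a ^ e k1 = int a ^ e k2] (mod int p) \<or> [int a ^ e k1 = - (int a ^ e k2)] (mod int p)"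
    using h cong_mult_lcancel[OF a1_cop] by (metis mult_minus_right)
  then have "[int a ^ e k1 = int a ^ e k2] (mod int p) \<or> [int a ^ e k1 = int a ^ (e k2 + n)] (mod int p)"
    using negshift[of "e k2"] by (meson cong_sym cong_trans)
  then have c: "[e k1 = e k2] (mod m) \<or> [e k1 = e k2 + n] (mod m)"
    using pow_cong_iff_int by blast
  have d4: "4 dvd m" using n4 mn by auto
  have "[e k1 = e k2] (mod 4)"
    using c
  proof
    assume "[e k1 = e k2] (mod m)" then show ?thesis using d4 by (rule cong_dvd_modulus_nat)
  next
    assume "[e k1 = e k2 + n] (mod m)"
    then have "[e k1 = e k2 + n] (mod 4)" using d4 by (rule cong_dvd_modulus_nat)
    moreover have "[e k2 + n = e k2] (mod 4)" using n4 by (auto simp: cong_def elim!: dvdE)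
    ultimately show ?thesis by (rule cong_trans)
  qed
  from cls[OF k this] have cl: "(k1 < n \<and> k2 < n) \<or> (n \<le> k1 \<and> n \<le> k2)"
    and de: "int (e k1) - int (e k2) = int k1 - int k2" by auto
  have small: "\<bar>int k1 - int k2\<bar> < int n" using cl k mn by auto
  from c show "k1 = k2"
  proof
    assume "[e k1 = e k2] (mod m)"
    then have "int m dvd (int k1 - int k2)"
      using de by (simp add: cong_int_iff[symmetric] cong_iff_dvd_diff)
    then show ?thesis using m_dvd_small small mn by fastforce
  next
    assume "[e k1 = e k2 + n] (mod m)"
    then have "int m dvd (int k1 - int k2 - int n)"
    proof -
      assume "[e k1 = e k2 + n] (mod m)"
      then have "int m dvd (int (e k1) - int (e k2) - int n)"
        by (simp add: cong_int_iff[symmetric] cong_iff_dvd_diff algebra_simps)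
      then show ?thesis using de by simp
    qed
    moreover have "\<bar>int k1 - int k2 - int n\<bar> < int m" "int k1 - int k2 - int n \<noteq> 0"
      using small mn by auto
    ultimately show ?thesis using m_dvd_small by blast
  qed
qed

definition edge :: "nat \<Rightarrow> nat option set" where
  "edge k = {Some (g k), Some (g (j k))}"

definition FF :: "nat option set set" where
  "FF = edge ` {k. even k \<and> k < m} \<union> {{Some 0, None}}"

lemma g_ne: "even k \<Longrightarrow> k < m \<Longrightarrow> g k \<noteq> g (j k)"
  using g_inj j_range[of k] unfolding inj_on_def by fastforce

lemma len_pair: "u \<noteq> v \<Longrightarrow> edge_len p {Some u, Some v} = Some {(u+p-v) mod p, (v+p-u) mod p}"
proof -
  assume uv: "u \<noteq> v"
  have "{d. \<exists>x y. Some x \<in> {Some u, Some v} \<and> Some y \<in> {Some u, Some v} \<and> x \<noteq> y \<and> d = (x + p - y) mod p}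
     = {(u+p-v) mod p, (v+p-u) mod p}" (is "?A = ?B")
  proof
    show "?A \<subseteq> ?B" by auto
    show "?B \<subseteq> ?A"
    proof (rule subsetI)
      fix d assume "d \<in> ?B"
      then consider "d = (u+p-v) mod p" | "d = (v+p-u) mod p" by auto
      then show "d \<in> ?A"
      proof cases
        case 1 then show ?thesis using uv by blast
      next
        case 2 then show ?thesis using uv by blast
      qed
    qed
  qed
  then show ?thesis unfolding edge_len_def by simp
qed

lemma len_edge: "g k \<noteq> g (j k) \<Longrightarrow>
  edge_len p (edge k) = Some {(g k + p - g (j k)) mod p, (g (j k) + p - g k) mod p}"
  unfolding edge_def by (rule len_pair)

lemma len_c: "edge_len p {Some 0, None} = None"
  unfolding edge_len_def by simp

lemma mod_int: "x < p \<Longrightarrow> y < p \<Longrightarrow> int ((x + p - y) mod p) = (int x - int y) mod int p"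
proof -
  assume "x < p" "y < p"
  then have "int (x + p - y) = (int x - int y) + int p" by simp
  then show ?thesis by (simp add: of_nat_mod)
qed

lemma D_def': "even k \<Longrightarrow> k < m \<Longrightarrow>
  [int (g k) - int (g (j k)) = (int a + 1) * int a ^ e k] (mod int p)"
  by (rule diff)

lemma inj_len: "inj_on (edge_len p) FF"
proof
  fix e1 e2 assume e1: "e1 \<in> FF" and e2: "e2 \<in> FF" and eq: "edge_len p e1 = edge_len p e2"
  show "e1 = e2"
  proof (cases "e1 = {Some 0, None}")
    case True
    then have "edge_len p e2 = None" using eq len_c by simp
    then show ?thesis using e2 True len_edge g_ne unfolding FF_def by auto
  next
    case False
    then obtain k1 where k1: "even k1" "k1 < m" "e1 = edge k1" using e1 unfolding FF_def by auto
    then have L1: "edge_len p e1 = Some {(g k1 + p - g (j k1)) mod p, (g (j k1) + p - g k1) mod p}"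
      using len_edge g_ne by simp
    have "e2 \<noteq> {Some 0, None}" using eq L1 len_c by auto
    then obtain k2 where k2: "even k2" "k2 < m" "e2 = edge k2" using e2 unfolding FF_def by auto
    then have L2: "edge_len p e2 = Some {(g k2 + p - g (j k2)) mod p, (g (j k2) + p - g k2) mod p}"
      using len_edge g_ne by simp
    define u1 where "u1 = g k1"
    define v1 where "v1 = g (j k1)"
    define u2 where "u2 = g k2"
    define v2 where "v2 = g (j k2)"
    have lt: "u1 < p" "v1 < p" "u2 < p" "v2 < p" unfolding u1_def v1_def u2_def v2_def
      using g_pos by auto
    have "(u1 + p - v1) mod p \<in> {(u2 + p - v2) mod p, (v2 + p - u2) mod p}"
      using eq L1 L2 unfolding u1_def v1_def u2_def v2_def by auto
    then have "int ((u1 + p - v1) mod p) = int ((u2 + p - v2) mod p) \<or>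
               int ((u1 + p - v1) mod p) = int ((v2 + p - u2) mod p)" by auto
    then have "(int u1 - int v1) mod int p = (int u2 - int v2) mod int p \<or>
               (int u1 - int v1) mod int p = (int v2 - int u2) mod int p"
      using lt by (simp add: mod_int)
    then have c: "[int u1 - int v1 = int u2 - int v2] (mod int p) \<or>
               [int u1 - int v1 = - (int u2 - int v2)] (mod int p)"
      by (auto simp: cong_def)
    have d1: "[int u1 - int v1 = (int a + 1) * int a ^ e k1] (mod int p)"
      unfolding u1_def v1_def using diff k1 by blast
    have d2: "[int u2 - int v2 = (int a + 1) * int a ^ e k2] (mod int p)"
      unfolding u2_def v2_def using diff k2 by blast
    have d2': "[- (int u2 - int v2) = - ((int a + 1) * int a ^ e k2)] (mod int p)"
      using d2 by (subst cong_minus_minus_iff)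
    have "[(int a + 1) * int a ^ e k1 = (int a + 1) * int a ^ e k2] (mod int p) \<or>
          [(int a + 1) * int a ^ e k1 = - ((int a + 1) * int a ^ e k2)] (mod int p)"
      using c
    proof
      assume "[int u1 - int v1 = int u2 - int v2] (mod int p)"
      then show ?thesis using d1 d2 by (meson cong_sym cong_trans)
    next
      assume "[int u1 - int v1 = - (int u2 - int v2)] (mod int p)"
      then show ?thesis using d1 d2' by (meson cong_sym cong_trans)
    qed
    then have "k1 = k2" using key k1(1,2) k2(1,2) by blast
    then show ?thesis using k1 k2 by simp
  qed
qed

lemma qres_ok: "\<forall>e\<in>FF. \<exists>u v. e = {u, v} \<and> qres p u \<and> \<not> qres p v"
proof
  fix e0 assume "e0 \<in> FF"
  then consider "e0 = {Some 0, None}" | k where "even k" "k < m" "e0 = edge k"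
    unfolding FF_def by auto
  then show "\<exists>u v. e0 = {u, v} \<and> qres p u \<and> \<not> qres p v"
  proof cases
    case 1
    have "QuadRes (int p) 0" unfolding QuadRes_def by (auto intro: exI[of _ 0])
    then show ?thesis using 1 by (intro exI[of _ "Some 0"] exI[of _ None]) (simp add: qres_def)
  next
    case 2
    have "odd (j k)" using j_range 2 by blast
    then show ?thesis using 2 QR_iff
      by (intro exI[of _ "Some (g k)"] exI[of _ "Some (g (j k))"]) (simp add: qres_def edge_def)
  qed
qed

lemma one_factor: "is_one_factor p FF"
  unfolding is_one_factor_def
proof (intro conjI ballI)
  fix e0 assume "e0 \<in> FF"
  then consider "e0 = {Some 0, None}" | k where "even k" "k < m" "e0 = edge k"
    unfolding FF_def by auto
  then show "\<exists>u v. u \<noteq> v \<and> u \<in> kverts p \<and> v \<in> kverts p \<and> e0 = {u, v}"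
  proof cases
    case 1
    then show ?thesis using p1 by (intro exI[of _ "Some 0"] exI[of _ None]) (simp add: kverts_def)
  next
    case 2
    have "g k < p" "g (j k) < p" using g_pos by auto
    then show ?thesis using 2 g_ne[of k]
      by (intro exI[of _ "Some (g k)"] exI[of _ "Some (g (j k))"]) (simp add: kverts_def edge_def)
  qed
next
  fix v assume v: "v \<in> kverts p"
  have noc: "None \<notin> edge k" "Some 0 \<notin> edge k" for k
    using g_pos[of k] g_pos[of "j k"] unfolding edge_def by auto
  show "\<exists>!e0. e0 \<in> FF \<and> v \<in> e0"
  proof (cases "v = None \<or> v = Some 0")
    case True
    show ?thesis
    proof (rule ex1I[of _ "{Some 0, None}"])
      show "{Some 0, None} \<in> FF \<and> v \<in> {Some 0, None}" using True unfolding FF_def by auto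
    next
      fix e0 assume "e0 \<in> FF \<and> v \<in> e0"
      then show "e0 = {Some 0, None}" using True noc unfolding FF_def by auto
    qed
  next
    case False
    obtain x where x0: "v = Some x" "x < p" using v False unfolding kverts_def by auto
    then have "x \<noteq> 0" using False by auto
    then have x: "v = Some x" "x \<in> {1..<p}" using x0 by auto
    then obtain l where l: "l < m" "g l = x" using g_surj' by blast
    have other: "e0 \<in> FF \<Longrightarrow> v \<in> e0 \<Longrightarrow> \<exists>k. even k \<and> k < m \<and> e0 = edge k \<and> (k = l \<or> j k = l)" for e0
    proof -
      assume "e0 \<in> FF" "v \<in> e0"
      then obtain k where k: "even k" "k < m" "e0 = edge k" using x unfolding FF_def by auto
      then have "g k = g l \<or> g (j k) = g l" using \<open>v \<in> e0\<close> x l unfolding edge_def by auto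
      then have "k = l \<or> j k = l" using g_inj k j_range[OF k(1,2)] l(1) unfolding inj_on_def by blast
      then show ?thesis using k by blast
    qed
    show ?thesis
    proof (cases "even l")
      case True
      show ?thesis
      proof (rule ex1I[of _ "edge l"])
        show "edge l \<in> FF \<and> v \<in> edge l" using True l x unfolding FF_def edge_def by auto
      next
        fix e0 assume "e0 \<in> FF \<and> v \<in> e0"
        then obtain k where "even k" "k < m" "e0 = edge k" "k = l \<or> j k = l" using other by blast
        then show "e0 = edge l" using True j_range by auto
      qed
    next
      case F: False
      then obtain k0 where k0: "even k0" "k0 < m" "j k0 = l" using j_surj l by blast
      show ?thesis
      proof (rule ex1I[of _ "edge k0"])
        show "edge k0 \<in> FF \<and> v \<in> edge k0" using k0 l x unfolding FF_def edge_def by auto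
      next
        fix e0 assume "e0 \<in> FF \<and> v \<in> e0"
        then obtain k where k: "even k" "k < m" "e0 = edge k" "k = l \<or> j k = l" using other by blast
        then have "j k = j k0" using F k0 by auto
        then have "k = k0" using j_inj k k0 by blast
        then show "e0 = edge k0" using k by simp
      qed
    qed
  qed
qed

theorem main: "\<exists>F. is_one_factor p F \<and>
           (\<forall>e\<in>F. \<exists>u v. e = {u, v} \<and> qres p u \<and> \<not> qres p v) \<and>
           inj_on (edge_len p) F"
  using one_factor qres_ok inj_len by blast

end

lemma (in S0) get_r:
  assumes "\<exists>x::int. \<not> int p dvd x \<and> [x ^ 4 = int a * (int a ^ 2 - int a + 1)] (mod int p)"
  shows "\<exists>r. [int a ^ (4*r) = int a * (int a ^ 2 - int a + 1)] (mod int p)"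
proof -
  obtain x :: int where x: "\<not> int p dvd x" "[x ^ 4 = int a * (int a ^ 2 - int a + 1)] (mod int p)"
    using assms by blast
  have "0 \<le> x mod int p" "x mod int p < int p" using p1 by auto
  moreover have "x mod int p \<noteq> 0" using x(1) by auto
  ultimately have "nat (x mod int p) \<in> {1..<p}" by auto
  then obtain i where i: "i < m" "g i = nat (x mod int p)" using g_surj' by blast
  then have "int (g i) = x mod int p" using \<open>0 \<le> x mod int p\<close> by simp
  then have "x mod int p = int a ^ i mod int p" using g_int[of i] by simp
  then have "[x = int a ^ i] (mod int p)" by (simp add: cong_def)
  then have "[x ^ 4 = (int a ^ i) ^ 4] (mod int p)" by (intro cong_pow)
  moreover have "(int a ^ i) ^ 4 = int a ^ (4 * i)" by (simp add: power_mult[symmetric] mult.commute)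
  ultimately have "[int a ^ (4 * i) = x ^ 4] (mod int p)" by (simp add: cong_sym)
  then show ?thesis using x(2) by (meson cong_trans)
qed

theorem proposition2p1:
  fixes p a :: nat
  assumes "prime p" and "[p = 1] (mod 8)"
    and "residue_primroot p a"
    and "\<exists>x::int. \<not> int p dvd x \<and> [x ^ 4 = int a * (int a ^ 2 - int a + 1)] (mod int p)"
  shows "\<exists>F. is_one_factor p F \<and>
           (\<forall>e\<in>F. \<exists>u v. e = {u, v} \<and> qres p u \<and> \<not> qres p v) \<and>
           inj_on (edge_len p) F"
proof -
  interpret S0 p a using assms(1-3) by unfold_locales
  obtain r where r: "[int a ^ (4*r) = int a * (int a ^ 2 - int a + 1)] (mod int p)"
    using get_r assms(4) by blast
  interpret S p a r using r by unfold_locales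
  show ?thesis by (rule main)
qed

end
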